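(* Let $\mathcal{A}$ be a $C^*$-algebra, $\overline{\mathcal{A}}$ its regular monotone completion, and $(\mathcal{V}(\overline{\mathcal{A}}),j)$ the Dedekind completion of the function system $\overline{\mathcal{A}}^{sa}$, with $\mathcal{A}^{sa}\subseteq\overline{\mathcal{A}}^{sa}$ regarded as a subspace of $\mathcal{V}(\overline{\mathcal{A}})$ via $j$. Then $\mathcal{A}^{sa}$ is a regular subspace of $\mathcal{V}(\overline{\mathcal{A}})$, and the embedding $\mathcal{A}^{sa}\hookrightarrow\mathcal{V}(\overline{\mathcal{A}})$ is sup-preserving.
   Context: All $C^*$-algebras are unital; $\mathcal{A}^{sa}$ is the self-adjoint part with order $a\le b\iff b-a\ge0$, which is a function system (Archimedean partially ordered real vector space with order unit $1$). A regular monotone completion of $\mathcal{A}$ is a monotone complete $C^*$-algebra $\overline{\mathcal{A}}$ containing $\mathcal{A}$ as a unital $C^*$-subalgebra such that $\overline{\mathcal{A}}^{sa}$ is the monotone closure of $\mathcal{A}^{sa}$ in $\overline{\mathcal{A}}^{sa}$, every $b\in\overline{\mathcal{A}}^{sa}$ is the supremum in $\overline{\mathcal{A}}^{sa}$ of $\{a\in\mathcal{A}^{sa}:a\le b\}$, and suprema existing in $\mathcal{A}^{sa}$ remain suprema in $\overline{\mathcal{A}}^{sa}$ (exists and unique up to $^*$-isomorphism, Hamana). A subspace $\mathcal{V}$ of a function system $\mathcal{W}$ is regular if every $w\in\mathcal{W}$ equals $\sup_{\mathcal{W}}\{v\in\mathcal{V}:v\le w\}$. An extension of a function system $\mathcal{V}$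 is a pair $(\mathcal{W},j)$ with $j:\mathcal{V}\to\mathcal{W}$ a unital linear order injection (order isomorphism onto its image with $j(1)=1$); it is regular if $j(\mathcal{V})$ is a regular subspace. A Dedekind completion of $\mathcal{V}$ is a regular extension $(\mathcal{W},j)$ with $\mathcal{W}$ a boundedly complete vector lattice (every subset bounded above has a supremum and every subset bounded below has an infimum); it exists and is unique up to linear order isomorphism (Wright). An order injection $j:\mathcal{V}\to\mathcal{W}$ is sup-preserving if whenever $\sup_{\mathcal{V}}\mathcal{F}=v$ for $\mathcal{F}\subseteq\mathcal{V}$, then $\sup_{\mathcal{W}}j(\mathcal{F})=j(v)$. *)

theory Defs
  imports Complex_Main
begin

text \<open>A unital C*-algebra is modelled on a type of class real_normed_algebra_1 and banach
  (a complete normed real algebra with unit of norm 1), together with a complex scalar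
  multiplication sc extending the real one, and an involution st.\<close>

definition cstar_alg ::
  "(complex \<Rightarrow> 'a::{real_normed_algebra_1,banach} \<Rightarrow> 'a) \<Rightarrow> ('a \<Rightarrow> 'a) \<Rightarrow> bool" where
  "cstar_alg sc st \<longleftrightarrow>
     (\<forall>r x. sc (complex_of_real r) x = r *\<^sub>R x) \<and>
     (\<forall>a b x. sc (a + b) x = sc a x + sc b x) \<and>
     (\<forall>a x y. sc a (x + y) = sc a x + sc a y) \<and>
     (\<forall>a b x. sc a (sc b x) = sc (a * b) x) \<and>
     (\<forall>a x y. sc a (x * y) = sc a x * y \<and> sc a (x * y) = x * sc a y) \<and>
     (\<forall>a x. norm (sc a x) = cmod a * norm x) \<and>
     (\<forall>x. st (st x) = x) \<and>
     (\<forall>x y. st (x + y) = st x + st y) \<and>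
     (\<forall>a x. st (sc a x) = sc (cnj a) (st x)) \<and>
     (\<forall>x y. st (x * y) = st y * st x) \<and>
     (\<forall>x. norm (st x * x) = (norm x)\<^sup>2)"

text \<open>Unital C*-subalgebra (of the C*-algebra whose carrier is the whole type).\<close>
definition cstar_subalg ::
  "(complex \<Rightarrow> 'a::{real_normed_algebra_1,banach} \<Rightarrow> 'a) \<Rightarrow> ('a \<Rightarrow> 'a) \<Rightarrow> 'a set \<Rightarrow> bool" where
  "cstar_subalg sc st A \<longleftrightarrow>
     1 \<in> A \<and> (\<forall>x\<in>A. \<forall>y\<in>A. x + y \<in> A \<and> x * y \<in> A) \<and>
     (\<forall>a. \<forall>x\<in>A. sc a x \<in> A) \<and> (\<forall>x\<in>A. st x \<in> A) \<and> closed A"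

definition spec_in ::
  "'a::real_normed_algebra_1 set \<Rightarrow> (complex \<Rightarrow> 'a \<Rightarrow> 'a) \<Rightarrow> 'a \<Rightarrow> complex set" where
  "spec_in S sc x = {c. \<not> (\<exists>y\<in>S. y * (x - sc c 1) = 1 \<and> (x - sc c 1) * y = 1)}"

definition sa_part :: "'a set \<Rightarrow> ('a \<Rightarrow> 'a) \<Rightarrow> 'a set" where
  "sa_part S st = {x\<in>S. st x = x}"

definition pos_in ::
  "'a::real_normed_algebra_1 set \<Rightarrow> (complex \<Rightarrow> 'a \<Rightarrow> 'a) \<Rightarrow> ('a \<Rightarrow> 'a) \<Rightarrow> 'a \<Rightarrow> bool" where
  "pos_in S sc st x \<longleftrightarrow> x \<in> sa_part S st \<and>
     (\<forall>c\<in>spec_in S sc x. Im c = 0 \<and> 0 \<le> Re c)"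

definition le_in ::
  "'a::real_normed_algebra_1 set \<Rightarrow> (complex \<Rightarrow> 'a \<Rightarrow> 'a) \<Rightarrow> ('a \<Rightarrow> 'a) \<Rightarrow> 'a \<Rightarrow> 'a \<Rightarrow> bool" where
  "le_in S sc st a b \<longleftrightarrow> pos_in S sc st (b - a)"

definition is_sup_on :: "('b \<Rightarrow> 'b \<Rightarrow> bool) \<Rightarrow> 'b set \<Rightarrow> 'b set \<Rightarrow> 'b \<Rightarrow> bool" where
  "is_sup_on le X F s \<longleftrightarrow> s \<in> X \<and> (\<forall>f\<in>F. le f s) \<and>
     (\<forall>u\<in>X. (\<forall>f\<in>F. le f u) \<longrightarrow> le s u)"

definition is_inf_on :: "('b \<Rightarrow> 'b \<Rightarrow> bool) \<Rightarrow> 'b set \<Rightarrow> 'b set \<Rightarrow> 'b \<Rightarrow> bool" where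
  "is_inf_on le X F s \<longleftrightarrow> s \<in> X \<and> (\<forall>f\<in>F. le s f) \<and>
     (\<forall>u\<in>X. (\<forall>f\<in>F. le u f) \<longrightarrow> le u s)"

definition up_directed :: "('b \<Rightarrow> 'b \<Rightarrow> bool) \<Rightarrow> 'b set \<Rightarrow> bool" where
  "up_directed le D \<longleftrightarrow> (\<forall>x\<in>D. \<forall>y\<in>D. \<exists>z\<in>D. le x z \<and> le y z)"

definition bdd_above_on :: "('b \<Rightarrow> 'b \<Rightarrow> bool) \<Rightarrow> 'b set \<Rightarrow> 'b set \<Rightarrow> bool" where
  "bdd_above_on le X F \<longleftrightarrow> (\<exists>u\<in>X. \<forall>f\<in>F. le f u)"

definition bdd_below_on :: "('b \<Rightarrow> 'b \<Rightarrow> bool) \<Rightarrow> 'b set \<Rightarrow> 'b set \<Rightarrow> bool" where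
  "bdd_below_on le X F \<longleftrightarrow> (\<exists>u\<in>X. \<forall>f\<in>F. le u f)"

definition monotone_complete ::
  "(complex \<Rightarrow> 'a::{real_normed_algebra_1,banach} \<Rightarrow> 'a) \<Rightarrow> ('a \<Rightarrow> 'a) \<Rightarrow> bool" where
  "monotone_complete sc st \<longleftrightarrow> cstar_alg sc st \<and>
     (\<forall>D. D \<subseteq> sa_part UNIV st \<and> D \<noteq> {} \<and> up_directed (le_in UNIV sc st) D \<and>
          bdd_above_on (le_in UNIV sc st) (sa_part UNIV st) D \<longrightarrow>
          (\<exists>s. is_sup_on (le_in UNIV sc st) (sa_part UNIV st) D s))"

definition monotone_closed ::
  "(complex \<Rightarrow> 'a::{real_normed_algebra_1,banach} \<Rightarrow> 'a) \<Rightarrow> ('a \<Rightarrow> 'a) \<Rightarrow> 'a set \<Rightarrow> bool" where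
  "monotone_closed sc st Y \<longleftrightarrow> Y \<subseteq> sa_part UNIV st \<and>
     (\<forall>D s. D \<subseteq> Y \<and> D \<noteq> {} \<and> up_directed (le_in UNIV sc st) D \<and>
          is_sup_on (le_in UNIV sc st) (sa_part UNIV st) D s \<longrightarrow> s \<in> Y)"

definition monotone_closure ::
  "(complex \<Rightarrow> 'a::{real_normed_algebra_1,banach} \<Rightarrow> 'a) \<Rightarrow> ('a \<Rightarrow> 'a) \<Rightarrow> 'a set \<Rightarrow> 'a set" where
  "monotone_closure sc st X = \<Inter> {Y. X \<subseteq> Y \<and> monotone_closed sc st Y}"

definition regular_monotone_completion ::
  "(complex \<Rightarrow> 'a::{real_normed_algebra_1,banach} \<Rightarrow> 'a) \<Rightarrow> ('a \<Rightarrow> 'a) \<Rightarrow> 'a set \<Rightarrow> bool" where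
  "regular_monotone_completion sc st A \<longleftrightarrow>
     monotone_complete sc st \<and> cstar_subalg sc st A \<and>
     sa_part UNIV st = monotone_closure sc st (sa_part A st) \<and>
     (\<forall>b\<in>sa_part UNIV st. is_sup_on (le_in UNIV sc st) (sa_part UNIV st)
         {a\<in>sa_part A st. le_in UNIV sc st a b} b) \<and>
     (\<forall>F s. F \<subseteq> sa_part A st \<and> is_sup_on (le_in A sc st) (sa_part A st) F s \<longrightarrow>
         is_sup_on (le_in UNIV sc st) (sa_part UNIV st) F s)"

text \<open>The ordered real vector space 'w with distinguished element e is a function system:
  e is an order unit and the order is Archimedean.\<close>
definition function_system :: "'w::ordered_real_vector \<Rightarrow> bool" where
  "function_system e \<longleftrightarrow>
     (\<forall>w. \<exists>r::real. - (r *\<^sub>R e) \<le> w \<and> w \<le> r *\<^sub>R e) \<and>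
     (\<forall>w. (\<forall>r::real. r > 0 \<longrightarrow> w \<le> r *\<^sub>R e) \<longrightarrow> w \<le> 0)"

definition bdd_complete_vector_lattice :: "'w::ordered_real_vector itself \<Rightarrow> bool" where
  "bdd_complete_vector_lattice _ \<longleftrightarrow>
     (\<forall>x y::'w. (\<exists>s. is_sup_on (\<le>) UNIV {x, y} s) \<and> (\<exists>s. is_inf_on (\<le>) UNIV {x, y} s)) \<and>
     (\<forall>F::'w set. F \<noteq> {} \<and> bdd_above_on (\<le>) UNIV F \<longrightarrow> (\<exists>s. is_sup_on (\<le>) UNIV F s)) \<and>
     (\<forall>F::'w set. F \<noteq> {} \<and> bdd_below_on (\<le>) UNIV F \<longrightarrow> (\<exists>s. is_inf_on (\<le>) UNIV F s))"

definition dedekind_completion_sa ::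
  "(complex \<Rightarrow> 'a::{real_normed_algebra_1,banach} \<Rightarrow> 'a) \<Rightarrow> ('a \<Rightarrow> 'a) \<Rightarrow>
   'w::ordered_real_vector \<Rightarrow> ('a \<Rightarrow> 'w) \<Rightarrow> bool" where
  "dedekind_completion_sa sc st e j \<longleftrightarrow>
     function_system e \<and>
     (\<forall>x\<in>sa_part UNIV st. \<forall>y\<in>sa_part UNIV st. j (x + y) = j x + j y) \<and>
     (\<forall>r. \<forall>x\<in>sa_part UNIV st. j (r *\<^sub>R x) = r *\<^sub>R j x) \<and>
     j 1 = e \<and>
     (\<forall>x\<in>sa_part UNIV st. \<forall>y\<in>sa_part UNIV st. le_in UNIV sc st x y \<longleftrightarrow> j x \<le> j y) \<and>
     (\<forall>w. is_sup_on (\<le>) UNIV {j v | v. v \<in> sa_part UNIV st \<and> j v \<le> w} w) \<and>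
     bdd_complete_vector_lattice TYPE('w)"

end

theory Submission
  imports Defs
begin

lemma neg_sa:
  assumes "cstar_alg sc st" "x \<in> sa_part UNIV st"
  shows "(-1::real) *\<^sub>R x \<in> sa_part UNIV st"
proof -
  have sc: "\<And>r x. sc (complex_of_real r) x = r *\<^sub>R x"
    and stsc: "\<And>a x. st (sc a x) = sc (cnj a) (st x)"
    using assms(1) unfolding cstar_alg_def by simp_all
  have "st ((-1::real) *\<^sub>R x) = st (sc (complex_of_real (-1)) x)" by (simp only: sc)
  also have "\<dots> = sc (cnj (complex_of_real (-1))) (st x)" by (rule stsc)
  also have "\<dots> = sc (complex_of_real (-1)) x" using assms(2) by (simp add: sa_part_def)
  also have "\<dots> = (-1::real) *\<^sub>R x" by (simp only: sc)
  finally show ?thesis by (simp add: sa_part_def)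
qed

lemma inf_form:
  assumes cs: "cstar_alg sc st" and dc: "dedekind_completion_sa sc st e j"
  shows "is_inf_on (\<le>) UNIV {j x | x. x \<in> sa_part UNIV st \<and> w \<le> j x} w"
proof -
  have sup: "\<And>w. is_sup_on (\<le>) UNIV {j v | v. v \<in> sa_part UNIV st \<and> j v \<le> w} w"
    and sca: "\<And>r x. x\<in>sa_part UNIV st \<Longrightarrow> j (r *\<^sub>R x) = r *\<^sub>R j x"
    using dc unfolding dedekind_completion_sa_def by blast+
  have S: "is_sup_on (\<le>) UNIV {j v | v. v \<in> sa_part UNIV st \<and> j v \<le> - w} (- w)"
    by (rule sup)
  show ?thesis
    unfolding is_inf_on_def
  proof (intro conjI ballI impI)
    show "w \<in> UNIV" by simp
  next
    fix f assume "f \<in> {j x |x. x \<in> sa_part UNIV st \<and> w \<le> j x}"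
    then show "w \<le> f" by auto
  next
    fix u assume H: "\<forall>f\<in>{j x |x. x \<in> sa_part UNIV st \<and> w \<le> j x}. u \<le> f"
    have "\<forall>f\<in>{j v | v. v \<in> sa_part UNIV st \<and> j v \<le> - w}. f \<le> - u"
    proof
      fix f assume "f \<in> {j v | v. v \<in> sa_part UNIV st \<and> j v \<le> - w}"
      then obtain v where v: "v \<in> sa_part UNIV st" "j v \<le> - w" "f = j v" by auto
      have m: "(-1::real) *\<^sub>R v \<in> sa_part UNIV st" by (rule neg_sa[OF cs v(1)])
      have jm: "j ((-1::real) *\<^sub>R v) = - j v" using sca[OF v(1), of "-1"] by (metis scaleR_minus1_left)
      have "w \<le> - j v" using v(2) by (simp add: le_minus_iff)
      then have "u \<le> j ((-1::real) *\<^sub>R v)" using H m jm by (metis (mono_tags, lifting) mem_Collect_eq)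
      then show "f \<le> - u" using jm v(3) by (simp add: le_minus_iff)
    qed
    then have "- w \<le> - u" using S unfolding is_sup_on_def by blast
    then show "u \<le> w" by simp
  qed
qed

lemma sup_pres:
  assumes cs: "cstar_alg sc st" and dc: "dedekind_completion_sa sc st e j"
    and F: "F \<subseteq> sa_part UNIV st" and s: "is_sup_on (le_in UNIV sc st) (sa_part UNIV st) F v"
  shows "is_sup_on (\<le>) UNIV (j ` F) (j v)"
proof -
  have ord: "\<And>x y. x\<in>sa_part UNIV st \<Longrightarrow> y\<in>sa_part UNIV st \<Longrightarrow> le_in UNIV sc st x y \<longleftrightarrow> j x \<le> j y"
    using dc unfolding dedekind_completion_sa_def by blast
  have v: "v \<in> sa_part UNIV st" and ub: "\<forall>f\<in>F. le_in UNIV sc st f v"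
    and lub: "\<forall>u\<in>sa_part UNIV st. (\<forall>f\<in>F. le_in UNIV sc st f u) \<longrightarrow> le_in UNIV sc st v u"
    using s unfolding is_sup_on_def by blast+
  show ?thesis unfolding is_sup_on_def
  proof (intro conjI ballI impI)
    show "j v \<in> UNIV" by simp
  next
    fix g assume "g \<in> j ` F"
    then obtain f where "f \<in> F" "g = j f" by auto
    then show "g \<le> j v" using ub ord[of f v] F v by auto
  next
    fix u assume H: "\<forall>f\<in>j ` F. f \<le> u"
    have I: "is_inf_on (\<le>) UNIV {j x | x. x \<in> sa_part UNIV st \<and> u \<le> j x} u"
      by (rule inf_form[OF cs dc])
    have "\<forall>f\<in>{j x | x. x \<in> sa_part UNIV st \<and> u \<le> j x}. j v \<le> f"
    proof
      fix g assume "g \<in> {j x | x. x \<in> sa_part UNIV st \<and> u \<le> j x}"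
      then obtain x where x: "x \<in> sa_part UNIV st" "u \<le> j x" "g = j x" by auto
      have "\<forall>f\<in>F. le_in UNIV sc st f x"
      proof
        fix f assume "f \<in> F"
        then have "j f \<le> u" using H by auto
        then have "j f \<le> j x" using x(2) by (rule order_trans)
        then show "le_in UNIV sc st f x" using ord[of f x] F \<open>f \<in> F\<close> x(1) by auto
      qed
      then have "le_in UNIV sc st v x" using lub x(1) by blast
      then show "j v \<le> g" using ord[OF v x(1)] x(3) by simp
    qed
    then show "j v \<le> u" using I unfolding is_inf_on_def by blast
  qed
qed

theorem proposition6p4:
  fixes sc :: "complex \<Rightarrow> 'a::{real_normed_algebra_1,banach} \<Rightarrow> 'a"
    and st :: "'a \<Rightarrow> 'a"
    and A :: "'a set"
    and e :: "'w::ordered_real_vector"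
    and j :: "'a \<Rightarrow> 'w"
  assumes "regular_monotone_completion sc st A"
    and "dedekind_completion_sa sc st e j"
  shows "(\<forall>w. is_sup_on (\<le>) UNIV {j a | a. a \<in> sa_part A st \<and> j a \<le> w} w) \<and>
         (\<forall>F v. F \<subseteq> sa_part A st \<and> is_sup_on (le_in A sc st) (sa_part A st) F v \<longrightarrow>
                is_sup_on (\<le>) UNIV (j ` F) (j v))"
proof -
  note rmc = assms(1)[unfolded regular_monotone_completion_def]
  have cs: "cstar_alg sc st" using rmc unfolding monotone_complete_def by blast
  have reg: "\<And>b. b\<in>sa_part UNIV st \<Longrightarrow> is_sup_on (le_in UNIV sc st) (sa_part UNIV st)
         {a\<in>sa_part A st. le_in UNIV sc st a b} b" using rmc by blast
  have supA: "\<And>F s. F \<subseteq> sa_part A st \<Longrightarrow> is_sup_on (le_in A sc st) (sa_part A st) F s \<Longrightarrow>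
         is_sup_on (le_in UNIV sc st) (sa_part UNIV st) F s" using rmc by blast
  have AU: "sa_part A st \<subseteq> sa_part UNIV st" by (auto simp: sa_part_def)
  have sup: "\<And>w. is_sup_on (\<le>) UNIV {j v | v. v \<in> sa_part UNIV st \<and> j v \<le> w} w"
    and ord: "\<And>x y. x\<in>sa_part UNIV st \<Longrightarrow> y\<in>sa_part UNIV st \<Longrightarrow> le_in UNIV sc st x y \<longleftrightarrow> j x \<le> j y"
    using assms(2) unfolding dedekind_completion_sa_def by blast+
  have P1: "is_sup_on (\<le>) UNIV {j a | a. a \<in> sa_part A st \<and> j a \<le> w} w" for w
    unfolding is_sup_on_def
  proof (intro conjI ballI impI)
    show "w \<in> UNIV" by simp
  next
    fix f assume "f \<in> {j a |a. a \<in> sa_part A st \<and> j a \<le> w}"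
    then show "f \<le> w" by auto
  next
    fix u assume H: "\<forall>f\<in>{j a |a. a \<in> sa_part A st \<and> j a \<le> w}. f \<le> u"
    have "\<forall>f\<in>{j v | v. v \<in> sa_part UNIV st \<and> j v \<le> w}. f \<le> u"
    proof
      fix g assume "g \<in> {j v | v. v \<in> sa_part UNIV st \<and> j v \<le> w}"
      then obtain v where v: "v \<in> sa_part UNIV st" "j v \<le> w" "g = j v" by auto
      let ?S = "{a\<in>sa_part A st. le_in UNIV sc st a v}"
      have S: "is_sup_on (\<le>) UNIV (j ` ?S) (j v)"
        by (rule sup_pres[OF cs assms(2)]) (use AU reg[OF v(1)] in auto)
      have "\<forall>f\<in>j ` ?S. f \<le> u"
      proof
        fix f assume "f \<in> j ` ?S"
        then obtain a where a: "a \<in> sa_part A st" "le_in UNIV sc st a v" "f = j a" by auto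
        have "j a \<le> j v" using ord[of a v] a AU v(1) by auto
        then have "j a \<le> w" using v(2) by (rule order_trans)
        then show "f \<le> u" using H a by auto
      qed
      then show "g \<le> u" using S v(3) unfolding is_sup_on_def by blast
    qed
    then show "w \<le> u" using sup[of w] unfolding is_sup_on_def by blast
  qed
  have P2: "is_sup_on (\<le>) UNIV (j ` F) (j v)"
    if "F \<subseteq> sa_part A st" "is_sup_on (le_in A sc st) (sa_part A st) F v" for F v
    by (rule sup_pres[OF cs assms(2)]) (use that AU supA in auto)
  show ?thesis using P1 P2 by blast
qed

end
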